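(* Let $P$ be the Borel probability measure on $\mathbb{R}$ with density $f(x)=(3/2)^m$ if $x\in J_m:=[1-\frac{1}{3^{m-1}},1-\frac{2}{3^m}]$ for some $m\in\mathbb{N}$, and $f(x)=0$ otherwise. Let $\alpha_n$ be an optimal set of $n$-means for $P$ with $n\ge4$. Then $\mathrm{card}(\alpha_n\cap J_1)\ge2$ and $\mathrm{card}(\alpha_n\cap[\frac23,1])\ge2$.
   Context: $\mathbb{N}=\{1,2,\dots\}$; $J_1=[0,\frac13]$. An optimal set of $n$-means for $P$ is a set $\alpha\subset\mathbb{R}$ with $\mathrm{card}(\alpha)\le n$ attaining $\inf\{\int\min_{a\in\alpha}(x-a)^2\,dP(x):\mathrm{card}(\alpha)\le n\}$. *)

theory Defs
  imports "HOL-Probability.Probability"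
begin

definition J :: "nat \<Rightarrow> real set" where
  "J m = {1 - 1 / 3 ^ (m - 1) .. 1 - 2 / 3 ^ m}"

text \<open>Density: (3/2)^m on J_m (m \<ge> 1), 0 elsewhere (the J_m are pairwise disjoint).\<close>
definition dens :: "real \<Rightarrow> real" where
  "dens x = (if \<exists>m\<ge>1. x \<in> J m then (3/2) ^ (LEAST m. m \<ge> 1 \<and> x \<in> J m) else 0)"

definition P :: "real measure" where
  "P = density lborel (\<lambda>x. ennreal (dens x))"

definition distortion :: "real measure \<Rightarrow> real set \<Rightarrow> real" where
  "distortion M \<alpha> = (\<integral>x. Min ((\<lambda>a. (x - a)\<^sup>2) ` \<alpha>) \<partial>M)"

definition optimal_n_means :: "real measure \<Rightarrow> nat \<Rightarrow> real set \<Rightarrow> bool" where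
  "optimal_n_means M n \<alpha> \<longleftrightarrow>
     finite \<alpha> \<and> \<alpha> \<noteq> {} \<and> card \<alpha> \<le> n \<and>
     (\<forall>\<beta>. finite \<beta> \<and> \<beta> \<noteq> {} \<and> card \<beta> \<le> n \<longrightarrow> distortion M \<alpha> \<le> distortion M \<beta>)"

end

theory Submission
  imports Defs
begin


lemma J_lo: "x \<in> J m \<Longrightarrow> 1 - 1/3^(m-1) \<le> x" by (simp add: J_def)
lemma J_hi: "x \<in> J m \<Longrightarrow> x \<le> 1 - 2/3^m" by (simp add: J_def)

lemma J_disj:
  assumes "1 \<le> k" "k < m" "x \<in> J k" shows "x \<notin> J m"
proof
  assume "x \<in> J m"
  then have "1 - 1/3^(m-1) \<le> x" by (rule J_lo)
  moreover have "x \<le> 1 - 2/3^k" using assms(3) by (rule J_hi)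
  moreover have "(3::real)^k \<le> 3^(m-1)" using assms by (intro power_increasing) auto
  then have "(1::real)/3^(m-1) \<le> 1/3^k" by (intro frac_le) auto
  moreover have "(2::real)/3^k = 2 * (1/3^k)" by simp
  moreover have "0 < (1::real)/3^k" by simp
  ultimately show False by linarith
qed

lemma dens_J: assumes "1 \<le> m" "x \<in> J m" shows "dens x = (3/2)^m"
proof -
  have "(LEAST k. 1 \<le> k \<and> x \<in> J k) = m"
  proof (rule Least_equality)
    show "1 \<le> m \<and> x \<in> J m" using assms by simp
    fix y assume "1 \<le> y \<and> x \<in> J y"
    then show "m \<le> y" using J_disj[of y m x] assms by (metis linorder_not_le)
  qed
  then show ?thesis using assms unfolding dens_def by auto
qed

lemma dens_nonneg: "0 \<le> dens x" by (simp add: dens_def)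

lemma dens_out: "\<not> (\<exists>m\<ge>1. x \<in> J m) \<Longrightarrow> dens x = 0" by (simp add: dens_def)

lemma dens_meas[measurable]: "dens \<in> borel_measurable borel"
  unfolding dens_def J_def by measurable

lemma J1: "J 1 = {0..1/3}" by (simp add: J_def)
lemma J2: "J 2 = {2/3..7/9}" by (simp add: J_def)
lemma J3: "J 3 = {8/9..25/27}" by (simp add: J_def)
lemma Jge3: assumes "3 \<le> m" "x \<in> J m" shows "8/9 \<le> x \<and> x \<le> 1"
proof -
  have "(3::real)^2 \<le> 3^(m-1)" using assms by (intro power_increasing) auto
  then have "1/3^(m-1) \<le> (1::real)/9" by (simp add: frac_le)
  moreover have "0 \<le> (2::real)/3^m" by simp
  ultimately show ?thesis using J_lo[OF assms(2)] J_hi[OF assms(2)] by linarith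
qed

definition inS :: "real \<Rightarrow> bool" where "inS x \<longleftrightarrow> (\<exists>m\<ge>1. x \<in> J m)"

lemma inS_cases:
  assumes "inS x"
  shows "(0 \<le> x \<and> x \<le> 1/3) \<or> (2/3 \<le> x \<and> x \<le> 7/9) \<or> (8/9 \<le> x \<and> x \<le> 1)"
proof -
  obtain m where m: "1 \<le> m" "x \<in> J m" using assms inS_def by auto
  consider "m = 1" | "m = 2" | "3 \<le> m" using m by linarith
  then show ?thesis
    by cases (use m J1 J2 Jge3 in auto)
qed

lemma W_piece:
  fixes f F :: "real \<Rightarrow> real"
  assumes m: "1 \<le> m" "{u..v} \<subseteq> J m" "u \<le> v"
    and fm: "f \<in> borel_measurable borel"
    and d: "\<And>x. x \<in> {u..v} \<Longrightarrow> DERIV F x :> f x"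
    and nn: "\<And>x. x \<in> {u..v} \<Longrightarrow> 0 \<le> f x"
  shows "(\<integral>\<^sup>+x. ennreal (dens x) * (ennreal (f x) * indicator {u..v} x) \<partial>lborel)
     = ennreal ((3/2)^m * (F v - F u))"
proof -
  have "(\<integral>\<^sup>+x. ennreal (dens x) * (ennreal (f x) * indicator {u..v} x) \<partial>lborel)
     = (\<integral>\<^sup>+x. ennreal ((3/2)^m) * (ennreal (f x) * indicator {u..v} x) \<partial>lborel)"
    by (intro nn_integral_cong) (use m dens_J in \<open>auto split: split_indicator\<close>)
  also have "\<dots> = ennreal ((3/2)^m) * (\<integral>\<^sup>+x. ennreal (f x) * indicator {u..v} x \<partial>lborel)"
    by (rule nn_integral_cmult) (use fm in measurable)
  also have "(\<integral>\<^sup>+x. ennreal (f x) * indicator {u..v} x \<partial>lborel) = ennreal (F v - F u)"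
    by (rule nn_integral_FTC_Icc[OF fm d nn m(3)])
  also have "ennreal ((3/2)^m) * ennreal (F v - F u) = ennreal ((3/2)^m * (F v - F u))"
    by (simp add: ennreal_mult')
  finally show ?thesis .
qed


lemma J_len: "1 \<le> m \<Longrightarrow> emeasure lborel (J m) = ennreal ((1/3)^m)"
proof -
  assume m: "1 \<le> m"
  then obtain k where k: "m = Suc k" by (cases m) auto
  have "(1::real) - 1/3^(m-1) \<le> 1 - 2/3^m" using k by (simp add: field_simps)
  then show ?thesis unfolding J_def using k by (simp add: field_simps power_divide)
qed

lemma term_le_suminf: "(f::nat \<Rightarrow> ennreal) j \<le> (\<Sum>i. f i)"
  using sum_le_suminf[of f "{j}"] by (simp add: summableI)

lemma tail_bound:
  assumes k: "1 \<le> k"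
  shows "(\<integral>\<^sup>+x. ennreal (dens x) * indicator (\<Union>m\<in>{k..}. J m) x \<partial>lborel) \<le> ennreal ((1/2)^k * 2)"
proof -
  have pw: "ennreal (dens x) * indicator (\<Union>m\<in>{k..}. J m) x
      \<le> (\<Sum>i. ennreal ((3/2)^(i+k)) * indicator (J (i+k)) x)" for x
  proof (cases "x \<in> (\<Union>m\<in>{k..}. J m)")
    case True
    then obtain j where j: "k \<le> j" "x \<in> J j" by auto
    have "ennreal (dens x) * indicator (\<Union>m\<in>{k..}. J m) x = ennreal ((3/2)^((j-k)+k)) * indicator (J ((j-k)+k)) x"
      using j True k dens_J[of j x] by simp
    also have "\<dots> \<le> (\<Sum>i. ennreal ((3/2)^(i+k)) * indicator (J (i+k)) x)"
      by (rule term_le_suminf)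
    finally show ?thesis .
  qed simp
  have "(\<integral>\<^sup>+x. ennreal (dens x) * indicator (\<Union>m\<in>{k..}. J m) x \<partial>lborel)
      \<le> (\<integral>\<^sup>+x. (\<Sum>i. ennreal ((3/2)^(i+k)) * indicator (J (i+k)) x) \<partial>lborel)"
    by (rule nn_integral_mono) (rule pw)
  also have "\<dots> = (\<Sum>i. \<integral>\<^sup>+x. ennreal ((3/2)^(i+k)) * indicator (J (i+k)) x \<partial>lborel)"
    by (rule nn_integral_suminf) (auto simp: J_def)
  also have "\<dots> = (\<Sum>i. ennreal ((1/2)^(i+k)))"
  proof (rule suminf_cong)
    fix i
    have "(\<integral>\<^sup>+x. ennreal ((3/2)^(i+k)) * indicator (J (i+k)) x \<partial>lborel)
        = ennreal ((3/2)^(i+k)) * emeasure lborel (J (i+k))"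
      by (rule nn_integral_cmult_indicator) (simp add: J_def)
    also have "\<dots> = ennreal ((3/2)^(i+k)) * ennreal ((1/3)^(i+k))"
      using k by (simp add: J_len)
    also have "\<dots> = ennreal ((1/2)^(i+k))"
      by (simp add: ennreal_mult'[symmetric] power_mult_distrib[symmetric])
    finally show "(\<integral>\<^sup>+x. ennreal ((3/2)^(i+k)) * indicator (J (i+k)) x \<partial>lborel) = ennreal ((1/2)^(i+k))" .
  qed
  also have "\<dots> = ennreal (\<Sum>i. (1/2::real)^(i+k))"
    by (rule suminf_ennreal2) (auto intro: summable_mult2 simp: power_add)
  also have "(\<Sum>i. (1/2::real)^(i+k)) = (1/2)^k * 2"
  proof -
    have "(\<Sum>i. (1/2::real)^(i+k)) = (\<Sum>i. (1/2)^i * (1/2)^k)" by (simp add: power_add)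
    also have "\<dots> = (\<Sum>i. (1/2::real)^i) * (1/2)^k"
      by (rule suminf_mult2[symmetric]) (rule summable_geometric, simp)
    also have "(\<Sum>i. (1/2::real)^i) = 2" using suminf_geometric[of "1/2::real"] by simp
    finally show ?thesis by simp
  qed
  finally show ?thesis .
qed

lemma dens_indicator: "ennreal (dens x) = ennreal (dens x) * indicator (\<Union>m\<in>{1..}. J m) x"
  using dens_out[of x] by (auto split: split_indicator)

lemma P_univ: "emeasure P UNIV \<le> 1"
proof -
  have "emeasure P UNIV = (\<integral>\<^sup>+x. ennreal (dens x) \<partial>lborel)"
    unfolding P_def by (subst emeasure_density) auto
  also have "\<dots> = (\<integral>\<^sup>+x. ennreal (dens x) * indicator (\<Union>m\<in>{1..}. J m) x \<partial>lborel)"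
    by (subst dens_indicator) simp
  also have "\<dots> \<le> ennreal ((1/2)^1 * 2)" by (rule tail_bound) simp
  finally show ?thesis by simp
qed

definition mn :: "real set \<Rightarrow> real \<Rightarrow> real" where
  "mn \<alpha> x = Min ((\<lambda>a. (x - a)\<^sup>2) ` \<alpha>)"

definition NN :: "real set \<Rightarrow> ennreal" where
  "NN \<alpha> = (\<integral>\<^sup>+x. ennreal (dens x) * ennreal (mn \<alpha> x) \<partial>lborel)"

lemma mn_meas[measurable]: "finite \<alpha> \<Longrightarrow> mn \<alpha> \<in> borel_measurable borel"
  unfolding mn_def by measurable

lemma mn_le: "finite \<alpha> \<Longrightarrow> a \<in> \<alpha> \<Longrightarrow> mn \<alpha> x \<le> (x - a)\<^sup>2"
  unfolding mn_def by (rule Min_le) auto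

lemma mn_ge: "finite \<alpha> \<Longrightarrow> \<alpha> \<noteq> {} \<Longrightarrow> (\<And>a. a \<in> \<alpha> \<Longrightarrow> L \<le> (x - a)\<^sup>2) \<Longrightarrow> L \<le> mn \<alpha> x"
  unfolding mn_def by (subst Min_ge_iff) auto

lemma mn_ex: "finite \<alpha> \<Longrightarrow> \<alpha> \<noteq> {} \<Longrightarrow> \<exists>a\<in>\<alpha>. mn \<alpha> x = (x - a)\<^sup>2"
proof -
  assume "finite \<alpha>" "\<alpha> \<noteq> {}"
  then have "Min ((\<lambda>a. (x - a)\<^sup>2) ` \<alpha>) \<in> (\<lambda>a. (x - a)\<^sup>2) ` \<alpha>" by (intro Min_in) auto
  then show ?thesis unfolding mn_def by blast
qed

lemma mn_nonneg: "finite \<alpha> \<Longrightarrow> \<alpha> \<noteq> {} \<Longrightarrow> 0 \<le> mn \<alpha> x"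
  by (rule mn_ge) auto

lemma NN_fin: assumes "finite \<alpha>" "\<alpha> \<noteq> {}" shows "NN \<alpha> < \<infinity>"
proof -
  obtain a where a: "a \<in> \<alpha>" using assms by auto
  define C where "C = (1 + \<bar>a\<bar>)\<^sup>2"
  have "ennreal (dens x) * ennreal (mn \<alpha> x) \<le> ennreal C * ennreal (dens x)" for x
  proof (cases "\<exists>m\<ge>1. x \<in> J m")
    case True
    then have "0 \<le> x \<and> x \<le> 1" using inS_cases[of x] inS_def by auto
    then have "\<bar>x - a\<bar> \<le> 1 + \<bar>a\<bar>" by (simp add: abs_if)
    then have "\<bar>x - a\<bar>\<^sup>2 \<le> (1 + \<bar>a\<bar>)\<^sup>2" by (rule power_mono) simp
    then have "mn \<alpha> x \<le> C" using mn_le[OF assms(1) a, of x] unfolding C_def by simp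
    then have "dens x * mn \<alpha> x \<le> C * dens x"
      using dens_nonneg[of x] by (subst mult.commute[of C]) (rule mult_left_mono)
    moreover have "0 \<le> mn \<alpha> x" using assms by (rule mn_nonneg)
    moreover have "0 \<le> C" unfolding C_def by simp
    ultimately show ?thesis using dens_nonneg[of x]
      by (simp add: ennreal_mult[symmetric] ennreal_leI)
  qed (simp add: dens_out)
  then have "NN \<alpha> \<le> (\<integral>\<^sup>+x. ennreal C * ennreal (dens x) \<partial>lborel)"
    unfolding NN_def by (rule nn_integral_mono)
  also have "\<dots> = ennreal C * (\<integral>\<^sup>+x. ennreal (dens x) \<partial>lborel)"
    by (rule nn_integral_cmult) simp
  also have "(\<integral>\<^sup>+x. ennreal (dens x) \<partial>lborel) = emeasure P UNIV"
    unfolding P_def by (subst emeasure_density) auto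
  also have "ennreal C * emeasure P UNIV < \<infinity>"
    using le_less_trans[OF P_univ ennreal_one_less_top] by (simp add: ennreal_mult_less_top)
  finally show ?thesis .
qed

lemma distortion_NN:
  assumes "finite \<alpha>" "\<alpha> \<noteq> {}" shows "distortion P \<alpha> = enn2real (NN \<alpha>)"
proof -
  have "distortion P \<alpha> = enn2real (\<integral>\<^sup>+x. ennreal (mn \<alpha> x) \<partial>P)"
    unfolding distortion_def mn_def[symmetric]
    by (rule integral_eq_nn_integral) (use assms mn_nonneg in \<open>auto simp: P_def\<close>)
  also have "(\<integral>\<^sup>+x. ennreal (mn \<alpha> x) \<partial>P) = NN \<alpha>"
    unfolding P_def NN_def using assms by (subst nn_integral_density) auto
  finally show ?thesis .
qed




lemma inS_J: "1 \<le> m \<Longrightarrow> x \<in> J m \<Longrightarrow> inS x" unfolding inS_def by auto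

lemma NN_mono:
  assumes "finite \<alpha>" "\<alpha> \<noteq> {}" "finite \<beta>" "\<beta> \<noteq> {}"
    and le: "\<And>x. inS x \<Longrightarrow> mn \<beta> x \<le> mn \<alpha> x"
  shows "NN \<beta> \<le> NN \<alpha>"
  unfolding NN_def
proof (rule nn_integral_mono)
  fix x
  show "ennreal (dens x) * ennreal (mn \<beta> x) \<le> ennreal (dens x) * ennreal (mn \<alpha> x)"
  proof (cases "inS x")
    case True then show ?thesis using le[OF True] by (intro mult_left_mono ennreal_leI) auto
  next
    case False then show ?thesis using dens_out[of x] inS_def by auto
  qed
qed

lemma NN_improve:
  assumes fa: "finite \<alpha>" "\<alpha> \<noteq> {}" and fb: "finite \<beta>" "\<beta> \<noteq> {}"
    and m: "1 \<le> m" "{u..v} \<subseteq> J m" "u < v" and d: "0 < \<delta>"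
    and le: "\<And>x. inS x \<Longrightarrow> mn \<beta> x \<le> mn \<alpha> x"
    and lt: "\<And>x. x \<in> {u..v} \<Longrightarrow> mn \<beta> x + \<delta> \<le> mn \<alpha> x"
  shows "NN \<beta> < NN \<alpha>"
proof -
  have pw: "ennreal (dens x) * ennreal (mn \<beta> x) + ennreal (dens x) * (ennreal \<delta> * indicator {u..v} x)
      \<le> ennreal (dens x) * ennreal (mn \<alpha> x)" for x
  proof (cases "x \<in> {u..v}")
    case True
    have "ennreal (dens x) * ennreal (mn \<beta> x) + ennreal (dens x) * (ennreal \<delta> * indicator {u..v} x)
        = ennreal (dens x) * ennreal (mn \<beta> x + \<delta>)"
      using True d mn_nonneg[OF fb] by (simp add: distrib_left[symmetric] ennreal_plus)
    also have "\<dots> \<le> ennreal (dens x) * ennreal (mn \<alpha> x)"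
      using lt[OF True] by (intro mult_left_mono ennreal_leI) auto
    finally show ?thesis .
  next
    case False
    have "ennreal (dens x) * ennreal (mn \<beta> x) \<le> ennreal (dens x) * ennreal (mn \<alpha> x)"
    proof (cases "inS x")
      case True then show ?thesis using le[OF True] by (intro mult_left_mono ennreal_leI) auto
    next
      case False then show ?thesis using dens_out[of x] inS_def by auto
    qed
    then show ?thesis using False by simp
  qed
  have "NN \<beta> + (\<integral>\<^sup>+x. ennreal (dens x) * (ennreal \<delta> * indicator {u..v} x) \<partial>lborel)
      = (\<integral>\<^sup>+x. ennreal (dens x) * ennreal (mn \<beta> x) + ennreal (dens x) * (ennreal \<delta> * indicator {u..v} x) \<partial>lborel)"
    unfolding NN_def by (rule nn_integral_add[symmetric]) (use fb in auto)
  also have "\<dots> \<le> NN \<alpha>" unfolding NN_def by (rule nn_integral_mono) (rule pw)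
  finally have 1: "NN \<beta> + (\<integral>\<^sup>+x. ennreal (dens x) * (ennreal \<delta> * indicator {u..v} x) \<partial>lborel) \<le> NN \<alpha>" .
  have "(\<integral>\<^sup>+x. ennreal (dens x) * (ennreal \<delta> * indicator {u..v} x) \<partial>lborel)
      = ennreal ((3/2)^m * (\<delta> * v - \<delta> * u))"
    by (rule W_piece[where f="\<lambda>_. \<delta>" and F="\<lambda>x. \<delta> * x"]) (use m d in \<open>auto intro!: derivative_eq_intros\<close>)
  moreover have "0 < (3/2::real)^m * (\<delta> * v - \<delta> * u)"
    using m d by (simp add: right_diff_distrib[symmetric])
  ultimately have 2: "0 < (\<integral>\<^sup>+x. ennreal (dens x) * (ennreal \<delta> * indicator {u..v} x) \<partial>lborel)"
    by simp
  have 3: "NN \<beta> < NN \<beta> + (\<integral>\<^sup>+x. ennreal (dens x) * (ennreal \<delta> * indicator {u..v} x) \<partial>lborel)"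
    using ennreal_add_left_cancel_less[of "NN \<beta>" 0 "(\<integral>\<^sup>+x. ennreal (dens x) * (ennreal \<delta> * indicator {u..v} x) \<partial>lborel)"]
      NN_fin[OF fb] 2 by simp
  show ?thesis by (rule less_le_trans[OF 3 1])
qed

lemma enn2real_strict: "x < (\<infinity>::ennreal) \<Longrightarrow> y < x \<Longrightarrow> enn2real y < enn2real x"
proof -
  assume x: "x < \<infinity>" and yx: "y < x"
  have y: "y < \<infinity>" using x yx by (rule_tac less_trans)
  have "ennreal (enn2real y) < ennreal (enn2real x)"
    using ennreal_enn2real[OF x[unfolded infinity_ennreal_def]] ennreal_enn2real[OF y[unfolded infinity_ennreal_def]] yx by simp
  then show ?thesis using ennreal_less_iff[of "enn2real y" "enn2real x"] by simp
qed

lemma opt_le: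
  assumes opt: "optimal_n_means P n \<alpha>" and b: "finite \<beta>" "\<beta> \<noteq> {}" "card \<beta> \<le> n"
  shows "\<not> NN \<beta> < NN \<alpha>"
proof
  assume lt: "NN \<beta> < NN \<alpha>"
  have a: "finite \<alpha>" "\<alpha> \<noteq> {}" using opt unfolding optimal_n_means_def by blast+
  have "distortion P \<alpha> \<le> distortion P \<beta>" using opt b unfolding optimal_n_means_def by blast
  then have le: "enn2real (NN \<alpha>) \<le> enn2real (NN \<beta>)"
    by (simp only: distortion_NN[OF a] distortion_NN[OF b(1,2)])
  have "enn2real (NN \<beta>) < enn2real (NN \<alpha>)" by (rule enn2real_strict[OF NN_fin[OF a] lt])
  then show False using le by simp
qed

lemma card_replace: "finite \<alpha> \<Longrightarrow> a \<in> \<alpha> \<Longrightarrow> card (insert t (\<alpha> - {a})) \<le> card \<alpha>"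
proof -
  assume f: "finite \<alpha>" and a: "a \<in> \<alpha>"
  have c: "card (\<alpha> - {a}) = card \<alpha> - 1" by (rule card_Diff_singleton[OF a])
  have "0 < card \<alpha>" using f a card_gt_0_iff by blast
  then show ?thesis using card_insert_le_m1[of "card \<alpha>" "\<alpha> - {a}" t] c by linarith
qed

lemma opt_replace:
  assumes opt: "optimal_n_means P n \<alpha>" and a: "a \<in> \<alpha>"
    and H: "\<And>x. inS x \<Longrightarrow> \<exists>b\<in>insert t (\<alpha> - {a}). (x - b)\<^sup>2 \<le> (x - a)\<^sup>2"
    and m: "1 \<le> m" "{u..v} \<subseteq> J m" "u < v" and d: "0 < \<delta>"
    and near: "\<And>x a'. x \<in> {u..v} \<Longrightarrow> a' \<in> \<alpha> \<Longrightarrow> (x - a)\<^sup>2 \<le> (x - a')\<^sup>2"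
    and gain: "\<And>x. x \<in> {u..v} \<Longrightarrow> (x - t)\<^sup>2 + \<delta> \<le> (x - a)\<^sup>2"
  shows False
proof -
  have fa: "finite \<alpha>" "\<alpha> \<noteq> {}" "card \<alpha> \<le> n" using opt unfolding optimal_n_means_def by auto
  define \<beta> where "\<beta> = insert t (\<alpha> - {a})"
  have fb: "finite \<beta>" "\<beta> \<noteq> {}" using fa unfolding \<beta>_def by auto
  have cb: "card \<beta> \<le> n" using card_replace[OF fa(1) a, of t] fa unfolding \<beta>_def by simp
  have "NN \<beta> < NN \<alpha>"
  proof (rule NN_improve[OF fa(1,2) fb m d])
    fix x assume x: "inS x"
    obtain a'' where a'': "a'' \<in> \<alpha>" "mn \<alpha> x = (x - a'')\<^sup>2" using mn_ex[OF fa(1,2)] by blast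
    show "mn \<beta> x \<le> mn \<alpha> x"
    proof (cases "a'' = a")
      case True
      obtain b where "b \<in> \<beta>" "(x - b)\<^sup>2 \<le> (x - a)\<^sup>2" using H[OF x] unfolding \<beta>_def by blast
      then show ?thesis using mn_le[OF fb(1), of b x] a'' True by simp
    next
      case False
      then have "a'' \<in> \<beta>" using a'' unfolding \<beta>_def by simp
      then show ?thesis using mn_le[OF fb(1), of a'' x] a'' by simp
    qed
  next
    fix x assume x: "x \<in> {u..v}"
    have "(x - a)\<^sup>2 \<le> mn \<alpha> x" by (rule mn_ge[OF fa(1,2)]) (rule near[OF x])
    moreover have "mn \<beta> x \<le> (x - t)\<^sup>2" by (rule mn_le[OF fb(1)]) (simp add: \<beta>_def)
    ultimately show "mn \<beta> x + \<delta> \<le> mn \<alpha> x" using gain[OF x] by simp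
  qed
  then show False using opt_le[OF opt fb cb] by simp
qed




lemma sqle: "0 \<le> c \<Longrightarrow> c \<le> \<bar>y\<bar> \<Longrightarrow> c\<^sup>2 \<le> (y::real)\<^sup>2"
  by (metis power2_abs power_mono)

lemma inS0: "inS 0" unfolding inS_def J_def by (rule exI[of _ 1]) simp

lemma add_point:
  assumes fb: "finite \<beta>" "\<beta> \<noteq> {}"
  shows "\<exists>p. NN (insert p \<beta>) < NN \<beta>"
proof -
  define N where "N = card \<beta>"
  define h :: real where "h = 1 / (3 * (real N + 1))"
  have h0: "0 < h" unfolding h_def by simp
  have hN: "(real N + 1) * h = 1/3" unfolding h_def by simp
  have "\<exists>k\<le>N. \<forall>a\<in>\<beta>. a \<le> real k * h \<or> (real k + 1) * h \<le> a"
  proof (rule ccontr)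
    assume na: "\<not> (\<exists>k\<le>N. \<forall>a\<in>\<beta>. a \<le> real k * h \<or> (real k + 1) * h \<le> a)"
    have ex: "\<forall>k\<in>{..N}. \<exists>a. a \<in> \<beta> \<and> real k * h < a \<and> a < (real k + 1) * h"
    proof
      fix k assume "k \<in> {..N}"
      then have "k \<le> N" by simp
      then obtain a where "a \<in> \<beta>" "\<not> (a \<le> real k * h \<or> (real k + 1) * h \<le> a)" using na by blast
      then show "\<exists>a. a \<in> \<beta> \<and> real k * h < a \<and> a < (real k + 1) * h" by (intro exI[of _ a]) simp
    qed
    obtain f where f: "\<forall>k\<in>{..N}. f k \<in> \<beta> \<and> real k * h < f k \<and> f k < (real k + 1) * h"
      using bchoice[OF ex] by blast
    have inj: "inj_on f {..N}"
    proof (rule inj_onI)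
      fix k k' assume k: "k \<in> {..N}" and k': "k' \<in> {..N}" and eq: "f k = f k'"
      show "k = k'"
      proof (rule ccontr)
        assume "k \<noteq> k'"
        then consider "k < k'" | "k' < k" by linarith
        then show False
        proof cases
          case 1
          then have "real k + 1 \<le> real k'" by simp
          then have "(real k + 1) * h \<le> real k' * h" using h0 by (intro mult_right_mono) simp_all
          moreover have "f k < (real k + 1) * h" "real k' * h < f k'" using f k k' by auto
          ultimately show False using eq by linarith
        next
          case 2
          then have "real k' + 1 \<le> real k" by simp
          then have "(real k' + 1) * h \<le> real k * h" using h0 by (intro mult_right_mono) simp_all
          moreover have "f k' < (real k' + 1) * h" "real k * h < f k" using f k k' by auto
          ultimately show False using eq by linarith
        qed
      qed
    qed
    have "f ` {..N} \<subseteq> \<beta>" using f by blast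
    then have "card {..N} \<le> card \<beta>" using card_inj_on_le[OF inj _ fb(1)] by blast
    then show False unfolding N_def by simp
  qed
  then obtain k where k: "k \<le> N" "\<And>a. a \<in> \<beta> \<Longrightarrow> a \<le> real k * h \<or> (real k + 1) * h \<le> a"
    by blast
  define K where "K = real k * h"
  have K1: "(real k + 1) * h = K + h" unfolding K_def by (simp add: algebra_simps)
  define p where "p = K + h/2"
  define u where "u = p - h/8"
  define v where "v = p + h/8"
  have kh: "0 \<le> K" unfolding K_def using h0 by simp
  have "(real k + 1) * h \<le> (real N + 1) * h" using k(1) h0 by (intro mult_right_mono) auto
  then have k1: "K + h \<le> 1/3" using hN K1 by simp
  have sub: "{u..v} \<subseteq> J 1" unfolding J1
  proof
    fix x assume "x \<in> {u..v}"
    then show "x \<in> {0..1/3}" using kh k1 h0 unfolding u_def v_def p_def by simp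
  qed
  have uv: "u < v" unfolding u_def v_def using h0 by simp
  have kk: "\<And>a. a \<in> \<beta> \<Longrightarrow> a \<le> K \<or> K + h \<le> a" using k(2) K1 unfolding K_def by metis
  have fi: "finite (insert p \<beta>)" "insert p \<beta> \<noteq> {}" using fb by auto
  have "NN (insert p \<beta>) < NN \<beta>"
  proof (rule NN_improve[OF fb fi _ sub uv, of "h\<^sup>2/16"])
    show "0 < h\<^sup>2/16" using h0 by simp
  next
    fix x
    show "mn (insert p \<beta>) x \<le> mn \<beta> x"
      by (rule mn_ge[OF fb]) (rule mn_le[OF fi(1)], simp)
  next
    fix x assume x: "x \<in> {u..v}"
    have "mn (insert p \<beta>) x \<le> (x - p)\<^sup>2" by (rule mn_le[OF fi(1)]) simp
    also have "(x - p)\<^sup>2 \<le> (h/8)\<^sup>2"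
    proof -
      have x1: "p - h/8 \<le> x" "x \<le> p + h/8" using x unfolding u_def v_def by simp_all
      have "\<bar>x - p\<bar> \<le> h/8" unfolding abs_le_iff using x1 by linarith
      then have "\<bar>x - p\<bar>\<^sup>2 \<le> (h/8)\<^sup>2" by (rule power_mono) simp
      then show ?thesis by simp
    qed
    finally have 1: "mn (insert p \<beta>) x \<le> (h/8)\<^sup>2" .
    have 2: "(3*h/8)\<^sup>2 \<le> mn \<beta> x"
    proof (rule mn_ge[OF fb])
      fix a assume a: "a \<in> \<beta>"
      show "(3*h/8)\<^sup>2 \<le> (x - a)\<^sup>2"
      proof (rule sqle)
        show "0 \<le> 3*h/8" using h0 by simp
        show "3*h/8 \<le> \<bar>x - a\<bar>"
          using kk[OF a] x h0 unfolding u_def v_def p_def by auto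
      qed
    qed
    have 3: "(h/8)\<^sup>2 + h\<^sup>2/16 \<le> (3*h/8)\<^sup>2" by (simp add: power2_eq_square)
    show "mn (insert p \<beta>) x + h\<^sup>2/16 \<le> mn \<beta> x" using 1 2 3 by linarith
  qed simp
  then show ?thesis by blast
qed

lemma opt_useless:
  assumes opt: "optimal_n_means P n \<alpha>" and a: "a \<in> \<alpha>"
    and H: "\<And>x. inS x \<Longrightarrow> \<exists>b\<in>\<alpha> - {a}. (x - b)\<^sup>2 \<le> (x - a)\<^sup>2"
  shows False
proof -
  have fa: "finite \<alpha>" "\<alpha> \<noteq> {}" "card \<alpha> \<le> n" using opt unfolding optimal_n_means_def by blast+
  define \<beta> where "\<beta> = \<alpha> - {a}"
  have fb: "finite \<beta>" "\<beta> \<noteq> {}" using fa H[OF inS0] unfolding \<beta>_def by auto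
  have le: "NN \<beta> \<le> NN \<alpha>"
  proof (rule NN_mono[OF fa(1,2) fb])
    fix x assume x: "inS x"
    obtain a'' where a'': "a'' \<in> \<alpha>" "mn \<alpha> x = (x - a'')\<^sup>2" using mn_ex[OF fa(1,2)] by blast
    show "mn \<beta> x \<le> mn \<alpha> x"
    proof (cases "a'' = a")
      case True
      obtain b where "b \<in> \<beta>" "(x - b)\<^sup>2 \<le> (x - a)\<^sup>2" using H[OF x] unfolding \<beta>_def by blast
      then show ?thesis using mn_le[OF fb(1), of b x] a'' True by simp
    next
      case False
      then have "a'' \<in> \<beta>" using a'' unfolding \<beta>_def by simp
      then show ?thesis using mn_le[OF fb(1), of a'' x] a'' by simp
    qed
  qed
  obtain p where p: "NN (insert p \<beta>) < NN \<beta>" using add_point[OF fb] by blast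
  have c: "card (insert p \<beta>) \<le> n" using card_replace[OF fa(1) a, of p] fa(3) unfolding \<beta>_def by simp
  have "NN (insert p \<beta>) < NN \<alpha>" using p le by (rule less_le_trans)
  then show False using opt_le[OF opt _ _ c] fb by simp
qed




lemma sq_le: fixes y z :: real assumes "\<bar>y\<bar> \<le> \<bar>z\<bar>" shows "y\<^sup>2 \<le> z\<^sup>2"
  using abs_le_square_iff assms by blast

lemma le_sum4:
  fixes x a b c d :: ennreal
  assumes "x \<le> a \<or> x \<le> b \<or> x \<le> c \<or> x \<le> d"
  shows "x \<le> a + b + c + d"
proof -
  have "a \<le> a + b + c + d" by (metis add.assoc le_iff_add)
  moreover have "b \<le> a + b + c + d" by (metis add.commute add.assoc le_iff_add)
  moreover have "c \<le> a + b + c + d" by (metis add.commute add.assoc le_iff_add)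
  moreover have "d \<le> a + b + c + d" by (metis add.commute le_iff_add)
  ultimately show ?thesis using assms by (meson order_trans)
qed

lemma piece_sq:
  assumes "1 \<le> m" "{u..v} \<subseteq> J m" "u \<le> v"
  shows "(\<integral>\<^sup>+x. ennreal (dens x) * (ennreal ((x - c)\<^sup>2) * indicator {u..v} x) \<partial>lborel)
     = ennreal ((3/2)^m * ((v - c)^3/3 - (u - c)^3/3))"
  by (rule W_piece[OF assms, where F="\<lambda>x. (x - c)^3/3"]) (auto intro!: derivative_eq_intros simp: power2_eq_square)

definition B4 :: "real set" where "B4 = {1/12, 1/4, 13/18, 17/18}"

lemma B4_fin: "finite B4" "B4 \<noteq> {}" "card B4 = 4" unfolding B4_def by auto

lemma B4_bound: "NN B4 \<le> ennreal (17/7776)"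
proof -
  define T where "T = (\<Union>m\<in>{3..}. J m)"
  define G1 where "G1 x = ennreal (dens x) * (ennreal ((x - 1/12)\<^sup>2) * indicator {0..1/6} x)" for x
  define G2 where "G2 x = ennreal (dens x) * (ennreal ((x - 1/4)\<^sup>2) * indicator {1/6..1/3} x)" for x
  define G3 where "G3 x = ennreal (dens x) * (ennreal ((x - 13/18)\<^sup>2) * indicator {2/3..7/9} x)" for x
  define G4 where "G4 x = ennreal (1/324) * (ennreal (dens x) * indicator T x)" for x
  have Tm[measurable]: "T \<in> sets borel" unfolding T_def J_def by (intro sets.countable_UN') auto
  have pw: "ennreal (dens x) * ennreal (mn B4 x) \<le> G1 x + G2 x + G3 x + G4 x" for x
  proof (cases "inS x")
    case False then show ?thesis using dens_out[of x] inS_def by simp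
  next
    case True
    then obtain m where m: "1 \<le> m" "x \<in> J m" unfolding inS_def by blast
    consider "m = 1" | "m = 2" | "3 \<le> m" using m by linarith
    then show ?thesis
    proof cases
      case 1
      then have x: "0 \<le> x" "x \<le> 1/3" using m J1 by auto
      show ?thesis
      proof (cases "x \<le> 1/6")
        case True
        have "mn B4 x \<le> (x - 1/12)\<^sup>2" by (rule mn_le[OF B4_fin(1)]) (simp add: B4_def)
        then have "ennreal (dens x) * ennreal (mn B4 x) \<le> G1 x"
          unfolding G1_def using True x by (auto intro!: mult_left_mono ennreal_leI)
        then show ?thesis by (intro le_sum4) simp
      next
        case False
        have "mn B4 x \<le> (x - 1/4)\<^sup>2" by (rule mn_le[OF B4_fin(1)]) (simp add: B4_def)
        then have "ennreal (dens x) * ennreal (mn B4 x) \<le> G2 x"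
          unfolding G2_def using False x by (auto intro!: mult_left_mono ennreal_leI)
        then show ?thesis by (intro le_sum4) simp
      qed
    next
      case 2
      then have x: "2/3 \<le> x" "x \<le> 7/9" using m J2 by auto
      have "mn B4 x \<le> (x - 13/18)\<^sup>2" by (rule mn_le[OF B4_fin(1)]) (simp add: B4_def)
      then have "ennreal (dens x) * ennreal (mn B4 x) \<le> G3 x"
        unfolding G3_def using x by (auto intro!: mult_left_mono ennreal_leI)
      then show ?thesis by (intro le_sum4) simp
    next
      case 3
      then have x: "8/9 \<le> x" "x \<le> 1" using m Jge3 by auto
      have xT: "x \<in> T" unfolding T_def using 3 m by auto
      have "mn B4 x \<le> (x - 17/18)\<^sup>2" by (rule mn_le[OF B4_fin(1)]) (simp add: B4_def)
      also have "\<dots> \<le> (1/18)\<^sup>2" by (rule sq_le) (use x in \<open>auto simp: abs_if\<close>)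
      finally have "mn B4 x \<le> 1/324" by (simp add: power2_eq_square)
      then have "ennreal (dens x) * ennreal (mn B4 x) \<le> ennreal (1/324) * ennreal (dens x)"
        by (subst mult.commute) (intro mult_right_mono ennreal_leI, auto)
      then have "ennreal (dens x) * ennreal (mn B4 x) \<le> G4 x"
        unfolding G4_def using xT by simp
      then show ?thesis by (intro le_sum4) simp
    qed
  qed
  have "NN B4 \<le> (\<integral>\<^sup>+x. G1 x + G2 x + G3 x + G4 x \<partial>lborel)"
    unfolding NN_def by (rule nn_integral_mono) (rule pw)
  also have "\<dots> = (\<integral>\<^sup>+x. G1 x \<partial>lborel) + (\<integral>\<^sup>+x. G2 x \<partial>lborel) + (\<integral>\<^sup>+x. G3 x \<partial>lborel) + (\<integral>\<^sup>+x. G4 x \<partial>lborel)"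
    unfolding G1_def G2_def G3_def G4_def by (simp add: nn_integral_add)
  also have "(\<integral>\<^sup>+x. G1 x \<partial>lborel) = ennreal (1/1728)"
    unfolding G1_def by (subst piece_sq[where m=1]) (auto simp: J_def power3_eq_cube power2_eq_square)
  also have "(\<integral>\<^sup>+x. G2 x \<partial>lborel) = ennreal (1/1728)"
    unfolding G2_def by (subst piece_sq[where m=1]) (auto simp: J_def power3_eq_cube power2_eq_square)
  also have "(\<integral>\<^sup>+x. G3 x \<partial>lborel) = ennreal (1/3888)"
    unfolding G3_def by (subst piece_sq[where m=2]) (auto simp: J_def power3_eq_cube power2_eq_square)
  also have "(\<integral>\<^sup>+x. G4 x \<partial>lborel) \<le> ennreal (1/1296)"
  proof -
    have "(\<integral>\<^sup>+x. G4 x \<partial>lborel) = ennreal (1/324) * (\<integral>\<^sup>+x. ennreal (dens x) * indicator T x \<partial>lborel)"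
      unfolding G4_def by (rule nn_integral_cmult) simp
    also have "\<dots> \<le> ennreal (1/324) * ennreal ((1/2)^3 * 2)"
      unfolding T_def by (intro mult_left_mono tail_bound) auto
    also have "\<dots> = ennreal (1/1296)" by (simp add: ennreal_mult[symmetric] power3_eq_cube)
    finally show ?thesis .
  qed
  also have "ennreal (1/1728) + ennreal (1/1728) + ennreal (1/3888) + ennreal (1/1296) = ennreal (17/7776)"
  proof -
    have "(17/7776::real) = 1/1728 + 1/1728 + 1/3888 + 1/1296" by simp
    then show ?thesis by (simp del: ennreal_plus add: ennreal_plus[symmetric])
  qed
  finally show ?thesis by simp
qed




lemma inS_split: "inS x \<Longrightarrow> (0 \<le> x \<and> x \<le> 1/3) \<or> (2/3 \<le> x \<and> x \<le> 1)"
  using inS_cases[of x] by auto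

lemma opt_glob:
  assumes opt: "optimal_n_means P n \<alpha>" and n: "4 \<le> n"
    and pw: "\<And>x. g x \<le> ennreal (dens x) * ennreal (mn \<alpha> x)"
    and big: "ennreal (17/7776) < (\<integral>\<^sup>+x. g x \<partial>lborel)"
  shows False
proof -
  have "(\<integral>\<^sup>+x. g x \<partial>lborel) \<le> NN \<alpha>" unfolding NN_def by (rule nn_integral_mono) (rule pw)
  then have "NN B4 < NN \<alpha>" using B4_bound big by (meson le_less_trans less_le_trans)
  then show False using opt_le[OF opt B4_fin(1,2)] B4_fin(3) n by simp
qed

lemma opt_glob1:
  assumes opt: "optimal_n_means P n \<alpha>" and n: "4 \<le> n"
    and m: "1 \<le> m" "{u..v} \<subseteq> J m" "u \<le> v"
    and lb: "\<And>x. x \<in> {u..v} \<Longrightarrow> (x - c)\<^sup>2 \<le> mn \<alpha> x"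
    and big: "17/7776 < (3/2)^m * ((v - c)^3/3 - (u - c)^3/3)"
  shows False
proof (rule opt_glob[OF opt n])
  fix x
  show "ennreal (dens x) * (ennreal ((x - c)\<^sup>2) * indicator {u..v} x) \<le> ennreal (dens x) * ennreal (mn \<alpha> x)"
  proof (cases "x \<in> {u..v}")
    case True then show ?thesis using lb[OF True] by (auto intro!: mult_left_mono ennreal_leI)
  qed simp
next
  show "ennreal (17/7776) < (\<integral>\<^sup>+x. ennreal (dens x) * (ennreal ((x - c)\<^sup>2) * indicator {u..v} x) \<partial>lborel)"
    using big by (subst piece_sq[OF m]) (simp add: ennreal_less_iff)
qed

lemma opt_nonneg:
  assumes opt: "optimal_n_means P n \<alpha>" and a: "a \<in> \<alpha>" shows "0 \<le> a"
proof (rule ccontr)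
  assume "\<not> 0 \<le> a" then have a0: "a < 0" by simp
  have fa: "finite \<alpha>" "\<alpha> \<noteq> {}" using opt unfolding optimal_n_means_def by blast+
  define E where "E = {a'\<in>\<alpha>. a < a'}"
  have fE: "finite E" using fa unfolding E_def by simp
  show False
  proof (cases "E = {} \<or> 0 < (a + Min E)/2")
    case True
    define v where "v = (if E = {} then 1/3 else min (1/3) ((a + Min E)/2))"
    have v0: "0 < v" "v \<le> 1/3" using True a0 unfolding v_def by auto
    have vE: "v \<le> (a + a')/2" if "a' \<in> E" for a'
    proof -
      have "E \<noteq> {}" using that by blast
      moreover have "Min E \<le> a'" using Min_le[OF fE that] .
      ultimately have "v \<le> (a + Min E)/2" unfolding v_def by (simp add: min_def)
      moreover have "(a + Min E)/2 \<le> (a + a')/2" using \<open>Min E \<le> a'\<close> by (simp add: divide_right_mono)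
      ultimately show ?thesis by (rule order_trans)
    qed
    have H: "\<exists>b\<in>insert 0 (\<alpha> - {a}). (x - b)\<^sup>2 \<le> (x - a)\<^sup>2" if "inS x" for x
    proof -
      have "0 \<le> x" using inS_split[OF that] by auto
      then have "(x - 0)\<^sup>2 \<le> (x - a)\<^sup>2" using a0 by (intro sq_le) (auto simp: abs_if)
      then show ?thesis by blast
    qed
    have sub: "{0..v} \<subseteq> J 1" using v0 unfolding J_def by auto
    have near: "(x - a)\<^sup>2 \<le> (x - a')\<^sup>2" if x: "x \<in> {0..v}" and a': "a' \<in> \<alpha>" for x a'
    proof (cases "a' \<le> a")
      case True then show ?thesis using x a0 by (intro sq_le) (auto simp: abs_if)
    next
      case False
      then have "a' \<in> E" using a' unfolding E_def by simp
      then have "x \<le> (a + a')/2" using vE x by fastforce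
      then show ?thesis using x a0 False by (intro sq_le) (auto simp: abs_if)
    qed
    have gain: "(x - 0)\<^sup>2 + a\<^sup>2 \<le> (x - a)\<^sup>2" if x: "x \<in> {0..v}" for x
    proof -
      have "(x - a)\<^sup>2 = (x - 0)\<^sup>2 + a\<^sup>2 + 2 * ((-a) * x)" by (simp add: power2_eq_square algebra_simps)
      moreover have "0 \<le> (-a) * x" using x a0 by (intro mult_nonneg_nonneg) auto
      ultimately show ?thesis by linarith
    qed
    show False
      by (rule opt_replace[OF opt a H _ sub _ _ near gain]) (use v0 a0 in auto)
  next
    case False
    then have E: "E \<noteq> {}" "(a + Min E)/2 \<le> 0" by auto
    have me: "Min E \<in> \<alpha>" "a < Min E" using Min_in[OF fE E(1)] unfolding E_def by auto
    show False
    proof (rule opt_useless[OF opt a])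
      fix x assume "inS x"
      then have "0 \<le> x" using inS_split[of x] by auto
      then have "(x - Min E)\<^sup>2 \<le> (x - a)\<^sup>2" using me E(2) by (intro sq_le) (auto simp: abs_if)
      moreover have "Min E \<in> \<alpha> - {a}" using me by simp
      ultimately show "\<exists>b\<in>\<alpha> - {a}. (x - b)\<^sup>2 \<le> (x - a)\<^sup>2" by blast
    qed
  qed
qed

lemma opt_le1:
  assumes opt: "optimal_n_means P n \<alpha>" and d: "d \<in> \<alpha>" shows "d \<le> 1"
proof (rule ccontr)
  assume "\<not> d \<le> 1" then have d1: "1 < d" by simp
  have fa: "finite \<alpha>" "\<alpha> \<noteq> {}" using opt unfolding optimal_n_means_def by blast+
  define E where "E = {a'\<in>\<alpha>. a' < d}"
  have fE: "finite E" using fa unfolding E_def by simp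
  show False
  proof (cases "E = {} \<or> (Max E + d)/2 < 1")
    case True
    define w where "w = (if E = {} then 0 else (Max E + d)/2)"
    have w1: "w < 1" using True unfolding w_def by auto
    have wE: "(a' + d)/2 \<le> w" if "a' \<in> E" for a'
    proof -
      have "E \<noteq> {}" using that by blast
      then have "w = (Max E + d)/2" unfolding w_def by simp
      moreover have "a' \<le> Max E" using Max_ge[OF fE that] .
      ultimately show ?thesis by (simp add: divide_right_mono)
    qed
    obtain k where k: "(1/3::real)^k < 1 - w" using real_arch_pow_inv[of "1 - w" "1/3"] w1 by auto
    define u :: real where "u = 1 - 1/3^k"
    define v :: real where "v = 1 - 2/3^(Suc k)"
    have Jm: "J (Suc k) = {u..v}" unfolding J_def u_def v_def by simp
    have uw: "w < u" using k unfolding u_def by (simp add: power_divide)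
    have uv: "u < v" unfolding u_def v_def by (simp add: field_simps)
    have v1: "v \<le> 1" unfolding v_def by simp
    have H: "\<exists>b\<in>insert 1 (\<alpha> - {d}). (x - b)\<^sup>2 \<le> (x - d)\<^sup>2" if "inS x" for x
    proof -
      have "x \<le> 1" using inS_split[of x] that by auto
      then have "(x - 1)\<^sup>2 \<le> (x - d)\<^sup>2" using d1 by (intro sq_le) (auto simp: abs_if)
      then show ?thesis by blast
    qed
    have near: "(x - d)\<^sup>2 \<le> (x - a')\<^sup>2" if x: "x \<in> {u..v}" and a': "a' \<in> \<alpha>" for x a'
    proof (cases "d \<le> a'")
      case True then show ?thesis using x v1 d1 by (intro sq_le) (auto simp: abs_if)
    next
      case False
      then have "a' \<in> E" using a' unfolding E_def by simp
      then have "(a' + d)/2 \<le> x" using wE uw x by fastforce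
      then show ?thesis using x v1 d1 False by (intro sq_le) (auto simp: abs_if)
    qed
    have gain: "(x - 1)\<^sup>2 + (d - 1)\<^sup>2 \<le> (x - d)\<^sup>2" if x: "x \<in> {u..v}" for x
    proof -
      have "(x - d)\<^sup>2 = (x-1)\<^sup>2 + (d-1)\<^sup>2 + 2*((1-x)*(d-1))" by (simp add: power2_eq_square algebra_simps)
      moreover have "0 \<le> (1-x)*(d-1)" using x v1 d1 by (intro mult_nonneg_nonneg) auto
      ultimately show ?thesis by linarith
    qed
    show False
      by (rule opt_replace[OF opt d H _ _ uv _ near gain, of "Suc k"]) (use Jm d1 in auto)
  next
    case False
    then have E: "E \<noteq> {}" "1 \<le> (Max E + d)/2" by auto
    have me: "Max E \<in> \<alpha>" "Max E < d" using Max_in[OF fE E(1)] unfolding E_def by auto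
    show False
    proof (rule opt_useless[OF opt d])
      fix x assume "inS x"
      then have "x \<le> 1" using inS_split[of x] by auto
      then have "(x - Max E)\<^sup>2 \<le> (x - d)\<^sup>2" using me E(2) by (intro sq_le) (auto simp: abs_if)
      moreover have "Max E \<in> \<alpha> - {d}" using me by simp
      ultimately show "\<exists>b\<in>\<alpha> - {d}. (x - b)\<^sup>2 \<le> (x - d)\<^sup>2" by blast
    qed
  qed
qed

lemma opt_nogap_hi:
  assumes opt: "optimal_n_means P n \<alpha>" and n: "4 \<le> n" and c: "c \<in> \<alpha>" "1/2 \<le> c" "c < 2/3"
  shows False
proof -
  have fa: "finite \<alpha>" "\<alpha> \<noteq> {}" using opt unfolding optimal_n_means_def by blast+
  show False
  proof (cases "\<exists>s\<in>\<alpha>. 1/6 \<le> s \<and> s < c")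
    case True
    then obtain s where s: "s \<in> \<alpha>" "1/6 \<le> s" "s < c" by blast
    have sdom: "(x - s)\<^sup>2 \<le> (x - c)\<^sup>2" if "x \<le> 1/3" for x
      using that s c by (intro sq_le) (auto simp: abs_if)
    define E where "E = {a'\<in>\<alpha>. c < a'}"
    have fE: "finite E" using fa unfolding E_def by simp
    show False
    proof (cases "E = {} \<or> 2/3 < (c + Min E)/2")
      case True
      define v where "v = (if E = {} then 7/9 else min (7/9) ((c + Min E)/2))"
      have v0: "2/3 < v" "v \<le> 7/9" using True unfolding v_def by (auto simp: min_def)
      have vE: "v \<le> (c + a')/2" if "a' \<in> E" for a'
      proof -
        have "E \<noteq> {}" using that by blast
        then have "v \<le> (c + Min E)/2" unfolding v_def by (simp add: min_def)
        moreover have "(c + Min E)/2 \<le> (c + a')/2" using Min_le[OF fE that] by (simp add: divide_right_mono)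
        ultimately show ?thesis by (rule order_trans)
      qed
      have H: "\<exists>b\<in>insert (2/3) (\<alpha> - {c}). (x - b)\<^sup>2 \<le> (x - c)\<^sup>2" if "inS x" for x
      proof (cases "x \<le> 1/3")
        case True
        then have "s \<in> insert (2/3) (\<alpha> - {c})" using s by auto
        then show ?thesis using sdom[OF True] by blast
      next
        case False
        then have "2/3 \<le> x" using inS_split[of x] that by auto
        then have "(x - 2/3)\<^sup>2 \<le> (x - c)\<^sup>2" using c by (intro sq_le) (auto simp: abs_if)
        then show ?thesis by blast
      qed
      have sub: "{2/3..v} \<subseteq> J 2" using v0 unfolding J2 by auto
      have near: "(x - c)\<^sup>2 \<le> (x - a')\<^sup>2" if x: "x \<in> {2/3..v}" and a': "a' \<in> \<alpha>" for x a'
      proof (cases "a' \<le> c")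
        case True then show ?thesis using x c by (intro sq_le) (auto simp: abs_if)
      next
        case False
        then have "a' \<in> E" using a' unfolding E_def by simp
        then have "x \<le> (c + a')/2" using vE x by fastforce
        then show ?thesis using x c False by (intro sq_le) (auto simp: abs_if)
      qed
      have gain: "(x - 2/3)\<^sup>2 + (2/3 - c)\<^sup>2 \<le> (x - c)\<^sup>2" if x: "x \<in> {2/3..v}" for x
      proof -
        have "(x - c)\<^sup>2 = (x - 2/3)\<^sup>2 + (2/3 - c)\<^sup>2 + 2*((x - 2/3)*(2/3 - c))"
          by (simp add: power2_eq_square algebra_simps)
        moreover have "0 \<le> (x - 2/3)*(2/3 - c)" using x c by (intro mult_nonneg_nonneg) auto
        ultimately show ?thesis by linarith
      qed
      show False
        by (rule opt_replace[OF opt c(1) H _ sub _ _ near gain]) (use v0 c in auto)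
    next
      case False
      then have E: "E \<noteq> {}" "(c + Min E)/2 \<le> 2/3" by auto
      have me: "Min E \<in> \<alpha>" "c < Min E" using Min_in[OF fE E(1)] unfolding E_def by auto
      show False
      proof (rule opt_useless[OF opt c(1)])
        fix x assume x: "inS x"
        show "\<exists>b\<in>\<alpha> - {c}. (x - b)\<^sup>2 \<le> (x - c)\<^sup>2"
        proof (cases "x \<le> 1/3")
          case True
          then show ?thesis using sdom[OF True] s by (intro bexI[of _ s]) auto
        next
          case False
          then have "2/3 \<le> x" using inS_split[of x] x by auto
          then have "(x - Min E)\<^sup>2 \<le> (x - c)\<^sup>2" using me E(2) by (intro sq_le) (auto simp: abs_if)
          then show ?thesis using me by (intro bexI[of _ "Min E"]) auto
        qed
      qed
    qed
  next
    case False
    show False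
    proof (rule opt_glob1[OF opt n, of 1 "1/6" "1/3" "1/6"])
      show "{1/6..1/3::real} \<subseteq> J 1" unfolding J_def by auto
    next
      fix x :: real assume x: "x \<in> {1/6..1/3}"
      show "(x - 1/6)\<^sup>2 \<le> mn \<alpha> x"
      proof (rule mn_ge[OF fa])
        fix a' assume a': "a' \<in> \<alpha>"
        show "(x - 1/6)\<^sup>2 \<le> (x - a')\<^sup>2"
        proof (cases "a' < 1/6")
          case True then show ?thesis using x by (intro sq_le) (auto simp: abs_if)
        next
          case f2: False
          then have "c \<le> a'" using False a' by (meson not_le)
          then show ?thesis using x c by (intro sq_le) (auto simp: abs_if)
        qed
      qed
    qed (simp_all add: power3_eq_cube)
  qed
qed

lemma opt_nogap_lo:
  assumes opt: "optimal_n_means P n \<alpha>" and n: "4 \<le> n" and c: "c \<in> \<alpha>" "1/3 < c" "c < 1/2"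
  shows False
proof -
  have fa: "finite \<alpha>" "\<alpha> \<noteq> {}" using opt unfolding optimal_n_means_def by blast+
  show False
  proof (cases "\<exists>e\<in>\<alpha>. c < e \<and> e \<le> 5/6")
    case True
    then obtain e where e: "e \<in> \<alpha>" "c < e" "e \<le> 5/6" by blast
    have edom: "(x - e)\<^sup>2 \<le> (x - c)\<^sup>2" if "2/3 \<le> x" for x
      using that e c by (intro sq_le) (auto simp: abs_if)
    define E where "E = {a'\<in>\<alpha>. a' < c}"
    have fE: "finite E" using fa unfolding E_def by simp
    show False
    proof (cases "E = {} \<or> (Max E + c)/2 < 1/3")
      case True
      define u where "u = (if E = {} then 0 else max 0 ((Max E + c)/2))"
      have u0: "0 \<le> u" "u < 1/3" using True unfolding u_def by (auto simp: max_def)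
      have uE: "(a' + c)/2 \<le> u" if "a' \<in> E" for a'
      proof -
        have "E \<noteq> {}" using that by blast
        then have "(Max E + c)/2 \<le> u" unfolding u_def by (simp add: max_def)
        moreover have "(a' + c)/2 \<le> (Max E + c)/2" using Max_ge[OF fE that] by (simp add: divide_right_mono)
        ultimately show ?thesis by linarith
      qed
      have H: "\<exists>b\<in>insert (1/3) (\<alpha> - {c}). (x - b)\<^sup>2 \<le> (x - c)\<^sup>2" if "inS x" for x
      proof (cases "x \<le> 1/3")
        case True
        then have "(x - 1/3)\<^sup>2 \<le> (x - c)\<^sup>2" using c by (intro sq_le) (auto simp: abs_if)
        then show ?thesis by blast
      next
        case False
        then have "2/3 \<le> x" using inS_split[of x] that by auto
        moreover have "e \<in> insert (1/3) (\<alpha> - {c})" using e by auto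
        ultimately show ?thesis using edom by blast
      qed
      have sub: "{u..1/3} \<subseteq> J 1" using u0 unfolding J_def by auto
      have near: "(x - c)\<^sup>2 \<le> (x - a')\<^sup>2" if x: "x \<in> {u..1/3}" and a': "a' \<in> \<alpha>" for x a'
      proof (cases "c \<le> a'")
        case True then show ?thesis using x c by (intro sq_le) (auto simp: abs_if)
      next
        case False
        then have "a' \<in> E" using a' unfolding E_def by simp
        then have "(a' + c)/2 \<le> x" using uE x by fastforce
        then show ?thesis using x c False by (intro sq_le) (auto simp: abs_if)
      qed
      have gain: "(x - 1/3)\<^sup>2 + (c - 1/3)\<^sup>2 \<le> (x - c)\<^sup>2" if x: "x \<in> {u..1/3}" for x
      proof -
        have "(x - c)\<^sup>2 = (x - 1/3)\<^sup>2 + (c - 1/3)\<^sup>2 + 2*((1/3 - x)*(c - 1/3))"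
          by (simp add: power2_eq_square algebra_simps)
        moreover have "0 \<le> (1/3 - x)*(c - 1/3)" using x c by (intro mult_nonneg_nonneg) auto
        ultimately show ?thesis by linarith
      qed
      show False
        by (rule opt_replace[OF opt c(1) H _ sub _ _ near gain]) (use u0 c in auto)
    next
      case False
      then have E: "E \<noteq> {}" "1/3 \<le> (Max E + c)/2" by auto
      have me: "Max E \<in> \<alpha>" "Max E < c" using Max_in[OF fE E(1)] unfolding E_def by auto
      show False
      proof (rule opt_useless[OF opt c(1)])
        fix x assume x: "inS x"
        show "\<exists>b\<in>\<alpha> - {c}. (x - b)\<^sup>2 \<le> (x - c)\<^sup>2"
        proof (cases "x \<le> 1/3")
          case True
          then have "(x - Max E)\<^sup>2 \<le> (x - c)\<^sup>2" using me E(2) by (intro sq_le) (auto simp: abs_if)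
          then show ?thesis using me by (intro bexI[of _ "Max E"]) auto
        next
          case False
          then have "2/3 \<le> x" using inS_split[of x] x by auto
          then show ?thesis using edom e by (intro bexI[of _ e]) auto
        qed
      qed
    qed
  next
    case False
    show False
    proof (rule opt_glob1[OF opt n, of 2 "2/3" "7/9" "5/6"])
      show "{2/3..7/9::real} \<subseteq> J 2" unfolding J2 by auto
    next
      fix x :: real assume x: "x \<in> {2/3..7/9}"
      show "(x - 5/6)\<^sup>2 \<le> mn \<alpha> x"
      proof (rule mn_ge[OF fa])
        fix a' assume a': "a' \<in> \<alpha>"
        show "(x - 5/6)\<^sup>2 \<le> (x - a')\<^sup>2"
        proof (cases "a' \<le> c")
          case True then show ?thesis using x c by (intro sq_le) (auto simp: abs_if)
        next
          case f2: False
          then have "5/6 < a'" using False a' by (meson not_le)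
          then show ?thesis using x by (intro sq_le) (auto simp: abs_if)
        qed
      qed
    qed (simp_all add: power3_eq_cube power2_eq_square)
  qed
qed

lemma opt_nogap:
  assumes opt: "optimal_n_means P n \<alpha>" and n: "4 \<le> n" and c: "c \<in> \<alpha>"
  shows "\<not> (1/3 < c \<and> c < 2/3)"
proof
  assume "1/3 < c \<and> c < 2/3"
  then show False using opt_nogap_hi[OF opt n c] opt_nogap_lo[OF opt n c] by linarith
qed

lemma claimA:
  assumes opt: "optimal_n_means P n \<alpha>" and n: "4 \<le> n"
  shows "2 \<le> card (\<alpha> \<inter> J 1)"
proof (rule ccontr)
  assume "\<not> 2 \<le> card (\<alpha> \<inter> J 1)"
  then have c1: "card (\<alpha> \<inter> J 1) \<le> 1" by simp
  have fa: "finite \<alpha>" "\<alpha> \<noteq> {}" using opt unfolding optimal_n_means_def by blast+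
  have pos: "\<And>a. a \<in> \<alpha> \<Longrightarrow> 0 \<le> a" using opt_nonneg[OF opt] by blast
  have ng: "\<And>a. a \<in> \<alpha> \<Longrightarrow> \<not> (1/3 < a \<and> a < 2/3)" using opt_nogap[OF opt n] by blast
  have fS: "finite (\<alpha> \<inter> J 1)" using fa by simp
  have J1': "J 1 = {0..1/3}" unfolding J_def by simp
  consider "\<alpha> \<inter> J 1 = {}" | b where "\<alpha> \<inter> J 1 = {b}"
    using c1 fS by (metis card_0_eq card_1_singletonE le_Suc_eq One_nat_def le_zero_eq)
  then show False
  proof cases
    case 1
    have far: "2/3 \<le> a" if "a \<in> \<alpha>" for a
    proof -
      have "a \<notin> J 1" using 1 that by blast
      then have "1/3 < a" using pos[OF that] unfolding J1' by auto
      then show ?thesis using ng[OF that] by linarith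
    qed
    show False
    proof (rule opt_glob1[OF opt n, of 1 0 "1/3" "2/3"])
      show "{0..1/3::real} \<subseteq> J 1" unfolding J1' by simp
    next
      fix x :: real assume x: "x \<in> {0..1/3}"
      show "(x - 2/3)\<^sup>2 \<le> mn \<alpha> x"
      proof (rule mn_ge[OF fa])
        fix a' assume a': "a' \<in> \<alpha>"
        show "(x - 2/3)\<^sup>2 \<le> (x - a')\<^sup>2" using x far[OF a'] by (intro sq_le) (auto simp: abs_if)
      qed
    qed (simp_all add: power3_eq_cube)
  next
    case 2
    then have b: "b \<in> \<alpha>" "0 \<le> b" "b \<le> 1/3" unfolding J1' by auto
    have far: "a = b \<or> 2/3 \<le> a" if "a \<in> \<alpha>" for a
    proof (cases "a \<in> J 1")
      case True then show ?thesis using 2 that by blast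
    next
      case False
      then have "1/3 < a" using pos[OF that] unfolding J1' by auto
      then show ?thesis using ng[OF that] by linarith
    qed
    have eq: "(1/3 - b)^3/3 - (0 - b)^3/3 = ((b - 1/6)\<^sup>2 + 1/108)/3"
      by (simp add: power3_eq_cube power2_eq_square field_simps) algebra?
    have q: "0 \<le> (b - 1/6)\<^sup>2" by simp
    have e2: "(3/2::real)^1 * (((b - 1/6)\<^sup>2 + 1/108)/3) = (b - 1/6)\<^sup>2/2 + 1/216" by simp
    have big: "17/7776 < (3/2)^1 * ((1/3 - b)^3/3 - (0 - b)^3/3)" unfolding eq e2 using q by linarith
    show False
    proof (rule opt_glob1[OF opt n _ _ _ _ big])
      show "{0..1/3::real} \<subseteq> J 1" unfolding J1' by simp
    next
      fix x :: real assume x: "x \<in> {0..1/3}"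
      show "(x - b)\<^sup>2 \<le> mn \<alpha> x"
      proof (rule mn_ge[OF fa])
        fix a' assume a': "a' \<in> \<alpha>"
        show "(x - b)\<^sup>2 \<le> (x - a')\<^sup>2" using x far[OF a'] b by (intro sq_le) (auto simp: abs_if)
      qed
    qed simp_all
  qed
qed

lemma claimB:
  assumes opt: "optimal_n_means P n \<alpha>" and n: "4 \<le> n"
  shows "2 \<le> card (\<alpha> \<inter> {2/3..1})"
proof (rule ccontr)
  assume "\<not> 2 \<le> card (\<alpha> \<inter> {2/3..1})"
  then have c1: "card (\<alpha> \<inter> {2/3..1}) \<le> 1" by simp
  have fa: "finite \<alpha>" "\<alpha> \<noteq> {}" using opt unfolding optimal_n_means_def by blast+
  have le1: "\<And>a. a \<in> \<alpha> \<Longrightarrow> a \<le> 1" using opt_le1[OF opt] by blast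
  have ng: "\<And>a. a \<in> \<alpha> \<Longrightarrow> \<not> (1/3 < a \<and> a < 2/3)" using opt_nogap[OF opt n] by blast
  have fS: "finite (\<alpha> \<inter> {2/3..1})" using fa by simp
  consider "\<alpha> \<inter> {2/3..1} = {}" | b where "\<alpha> \<inter> {2/3..1} = {b}"
    using c1 fS by (metis card_0_eq card_1_singletonE le_Suc_eq One_nat_def le_zero_eq)
  then show False
  proof cases
    case 1
    have far: "a \<le> 1/3" if "a \<in> \<alpha>" for a
    proof -
      have "a \<notin> {2/3..1}" using 1 that by blast
      then have "a < 2/3" using le1[OF that] by auto
      then show ?thesis using ng[OF that] by linarith
    qed
    show False
    proof (rule opt_glob1[OF opt n, of 2 "2/3" "7/9" "1/3"])
      show "{2/3..7/9::real} \<subseteq> J 2" unfolding J2 by simp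
    next
      fix x :: real assume x: "x \<in> {2/3..7/9}"
      show "(x - 1/3)\<^sup>2 \<le> mn \<alpha> x"
      proof (rule mn_ge[OF fa])
        fix a' assume a': "a' \<in> \<alpha>"
        show "(x - 1/3)\<^sup>2 \<le> (x - a')\<^sup>2" using x far[OF a'] by (intro sq_le) (auto simp: abs_if)
      qed
    qed (simp_all add: power3_eq_cube power2_eq_square)
  next
    case 2
    then have b: "b \<in> \<alpha>" "2/3 \<le> b" "b \<le> 1" by auto
    have far: "a = b \<or> a \<le> 1/3" if "a \<in> \<alpha>" for a
    proof (cases "a \<in> {2/3..1}")
      case True then show ?thesis using 2 that by blast
    next
      case False
      then have "a < 2/3" using le1[OF that] by auto
      then show ?thesis using ng[OF that] by linarith
    qed
    have lb: "(x - b)\<^sup>2 \<le> mn \<alpha> x" if "2/3 \<le> x" "x \<le> 1" for x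
    proof (rule mn_ge[OF fa])
      fix a' assume a': "a' \<in> \<alpha>"
      show "(x - b)\<^sup>2 \<le> (x - a')\<^sup>2" using that far[OF a'] b by (intro sq_le) (auto simp: abs_if)
    qed
    define g where "g x = ennreal (dens x) * (ennreal ((x - b)\<^sup>2) * indicator {2/3..7/9} x)
        + ennreal (dens x) * (ennreal ((x - b)\<^sup>2) * indicator {8/9..25/27} x)" for x
    show False
    proof (rule opt_glob[OF opt n, of g])
      fix x
      show "g x \<le> ennreal (dens x) * ennreal (mn \<alpha> x)"
      proof (cases "x \<in> {2/3..7/9}")
        case True
        then have "x \<notin> {8/9..25/27}" by auto
        then show ?thesis using True lb[of x] unfolding g_def by (auto intro!: mult_left_mono ennreal_leI)
      next
        case False
        show ?thesis
        proof (cases "x \<in> {8/9..25/27}")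
          case True
          then show ?thesis using False lb[of x] unfolding g_def by (auto intro!: mult_left_mono ennreal_leI)
        qed (use False in \<open>simp add: g_def\<close>)
      qed
    next
      define I2 where "I2 = (3/2::real)^2 * ((7/9 - b)^3/3 - (2/3 - b)^3/3)"
      define I3 where "I3 = (3/2::real)^3 * ((25/27 - b)^3/3 - (8/9 - b)^3/3)"
      have i2: "(\<integral>\<^sup>+x. ennreal (dens x) * (ennreal ((x - b)\<^sup>2) * indicator {2/3..7/9} x) \<partial>lborel) = ennreal I2"
        unfolding I2_def by (rule piece_sq) (auto simp: J2)
      have i3: "(\<integral>\<^sup>+x. ennreal (dens x) * (ennreal ((x - b)\<^sup>2) * indicator {8/9..25/27} x) \<partial>lborel) = ennreal I3"
        unfolding I3_def by (rule piece_sq) (auto simp: J3)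
      have e2: "I2 = 1/4 * ((13/18 - b)\<^sup>2 + 1/972)"
        unfolding I2_def by (simp add: power3_eq_cube power2_eq_square field_simps)
      have e3: "I3 = 1/8 * ((49/54 - b)\<^sup>2 + 1/8748)"
        unfolding I3_def by (simp add: power3_eq_cube power2_eq_square field_simps)
      have I2p: "0 \<le> I2" unfolding e2 by (intro mult_nonneg_nonneg add_nonneg_nonneg) auto
      have I3p: "0 \<le> I3" unfolding e3 by (intro mult_nonneg_nonneg add_nonneg_nonneg) auto
      have eq: "I2 + I3 = 3/8 * (b - 127/162)\<^sup>2 + 73/23328"
        unfolding e2 e3 by (simp add: power3_eq_cube power2_eq_square field_simps)
      have q: "0 \<le> (b - 127/162)\<^sup>2" by simp
      have big: "17/7776 < I2 + I3" unfolding eq using q by linarith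
      have "(\<integral>\<^sup>+x. g x \<partial>lborel) = ennreal I2 + ennreal I3"
        unfolding g_def by (subst nn_integral_add) (auto simp: i2 i3)
      also have "\<dots> = ennreal (I2 + I3)" using I2p I3p by (simp add: ennreal_plus)
      finally show "ennreal (17/7776) < (\<integral>\<^sup>+x. g x \<partial>lborel)" using big by (simp add: ennreal_less_iff)
    qed
  qed
qed


theorem proposition4p4:
  fixes n :: nat and \<alpha> :: "real set"
  assumes "n \<ge> 4" and "optimal_n_means P n \<alpha>"
  shows "card (\<alpha> \<inter> J 1) \<ge> 2 \<and> card (\<alpha> \<inter> {2/3..1}) \<ge> 2"
  using claimA[OF assms(2,1)] claimB[OF assms(2,1)] by simp

end
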